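(* Let $A,B,C$ be non-empty convex compact subsets of $\mathbb{R}$ (i.e. compact intervals). Then the metric sum is associative on them: $$(A\oplus B)\oplus C= A\oplus (B\oplus C)=A\oplus B\oplus C.$$
   Context: For non-empty compact $A,B\subseteq\mathbb{R}$ and $b\in\mathbb{R}$, let $D(b,A)=\min_{a\in A}|b-a|$ and $\Lambda_A(b)=\{a\in A: |b-a|=D(b,A)\}$. The set of metric pairs is $\Lambda(A,B)=\{(a,b)\in A\times B: a\in\Lambda_A(b)\text{ or } b\in\Lambda_B(a)\}$. For non-empty compact $A_0,\dots,A_N\subseteq\mathbb{R}$, the metric chains are $\mathrm{Ch}(A_0,\dots,A_N)=\{(a_0,\dots,a_N)\in A_0\times\cdots\times A_N: (a_j,a_{j+1})\in\Lambda(A_j,A_{j+1}),\ j=0,\dots,N-1\}$, and for $\lambda_0,\dots,\lambda_N\in\mathbb{R}$ the metric linear combination is $\bigoplus_{j=0}^N\lambda_jA_j=\{\sum_{j=0}^N\lambda_ja_j:(a_0,\dots,a_N)\in\mathrm{Ch}(A_0,\dots,A_N)\}$. In particular $A\oplus B=\{a+b:(a,b)\in\Lambda(A,B)\}$ and $A\oplus B\oplus C=\{a+b+c:(a,b,c)\in\mathrm{Ch}(A,B,C)\}$. *)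

theory Defs
  imports "HOL-Analysis.Analysis"
begin

text \<open>D(b,A) = min over a in A of |b - a| (for non-empty compact A this minimum
  is attained and equals the infimum, i.e. the library's infdist).\<close>
definition Dist :: "real \<Rightarrow> real set \<Rightarrow> real" where
  "Dist b A = infdist b A"

definition nearest :: "real set \<Rightarrow> real \<Rightarrow> real set" where
  "nearest A b = {a \<in> A. \<bar>b - a\<bar> = Dist b A}"

definition metric_pairs :: "real set \<Rightarrow> real set \<Rightarrow> (real \<times> real) set" where
  "metric_pairs A B = {(a, b) \<in> A \<times> B. a \<in> nearest A b \<or> b \<in> nearest B a}"

definition metric_sum :: "real set \<Rightarrow> real set \<Rightarrow> real set" where
  "metric_sum A B = {a + b | a b. (a, b) \<in> metric_pairs A B}"

definition metric_chains3 :: "real set \<Rightarrow> real set \<Rightarrow> real set \<Rightarrow> (real \<times> real \<times> real) set" where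
  "metric_chains3 A B C = {(a, b, c). a \<in> A \<and> b \<in> B \<and> c \<in> C \<and>
       (a, b) \<in> metric_pairs A B \<and> (b, c) \<in> metric_pairs B C}"

definition metric_sum3 :: "real set \<Rightarrow> real set \<Rightarrow> real set \<Rightarrow> real set" where
  "metric_sum3 A B C = {a + b + c | a b c. (a, b, c) \<in> metric_chains3 A B C}"

end

theory Submission
  imports Defs
begin

definition cl :: "real \<Rightarrow> real \<Rightarrow> real \<Rightarrow> real" where
  "cl a1 a2 t = max a1 (min a2 t)"

lemma Dist_int: assumes "a1 \<le> a2" shows "Dist t {a1..a2} = \<bar>t - cl a1 a2 t\<bar>"
proof -
  have ne: "{a1..a2} \<noteq> {}" using assms by auto
  have m: "cl a1 a2 t \<in> {a1..a2}" using assms by (auto simp: cl_def)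
  have "infdist t {a1..a2} \<le> dist t (cl a1 a2 t)" using m by (rule infdist_le)
  moreover have "dist t (cl a1 a2 t) \<le> infdist t {a1..a2}"
    unfolding infdist_notempty[OF ne]
    by (rule cINF_greatest[OF ne]) (auto simp: dist_real_def cl_def)
  ultimately show ?thesis by (simp add: Dist_def dist_real_def)
qed

lemma nearest_int: assumes "a1 \<le> a2"
  shows "a \<in> nearest {a1..a2} t \<longleftrightarrow> a = cl a1 a2 t"
  using assms by (auto simp: nearest_def Dist_int cl_def)

lemma pairs_int: assumes "a1 \<le> a2" "b1 \<le> b2"
  shows "(a,b) \<in> metric_pairs {a1..a2} {b1..b2} \<longleftrightarrow>
    a \<in> {a1..a2} \<and> b \<in> {b1..b2} \<and> (a = cl a1 a2 b \<or> b = cl b1 b2 a)"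
  using assms by (auto simp: metric_pairs_def nearest_int)

lemma cl_pair: assumes "a1 \<le> a2" "b1 \<le> b2"
  shows "(cl a1 a2 t, cl b1 b2 t) \<in> metric_pairs {a1..a2} {b1..b2}"
  unfolding pairs_int[OF assms] using assms
  by (auto simp: cl_def max_def min_def)

lemma cont_cl: "continuous_on S (cl a1 a2)"
  unfolding cl_def by (intro continuous_intros)

lemma sum_int: assumes "a1 \<le> a2" "b1 \<le> b2"
  shows "metric_sum {a1..a2} {b1..b2} = {a1+b1..a2+b2}"
proof
  show "metric_sum {a1..a2} {b1..b2} \<subseteq> {a1+b1..a2+b2}"
    by (auto simp: metric_sum_def metric_pairs_def)
next
  show "{a1+b1..a2+b2} \<subseteq> metric_sum {a1..a2} {b1..b2}"
  proof
    fix s assume s: "s \<in> {a1+b1..a2+b2}"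
    let ?f = "\<lambda>t. cl a1 a2 t + cl b1 b2 t"
    have "\<exists>t. min a1 b1 \<le> t \<and> t \<le> max a2 b2 \<and> ?f t = s"
      apply (rule IVT')
      using s assms by (auto simp: cl_def intro!: continuous_intros)
    then obtain t where "?f t = s" by blast
    with cl_pair[OF assms, of t] show "s \<in> metric_sum {a1..a2} {b1..b2}"
      unfolding metric_sum_def by blast
  qed
qed

lemma sum3_int: assumes "a1 \<le> a2" "b1 \<le> b2" "c1 \<le> c2"
  shows "metric_sum3 {a1..a2} {b1..b2} {c1..c2} = {a1+b1+c1..a2+b2+c2}"
proof
  show "metric_sum3 {a1..a2} {b1..b2} {c1..c2} \<subseteq> {a1+b1+c1..a2+b2+c2}"
    by (auto simp: metric_sum3_def metric_chains3_def)
next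
  show "{a1+b1+c1..a2+b2+c2} \<subseteq> metric_sum3 {a1..a2} {b1..b2} {c1..c2}"
  proof
    fix s assume s: "s \<in> {a1+b1+c1..a2+b2+c2}"
    let ?f = "\<lambda>t. cl a1 a2 t + cl b1 b2 t + cl c1 c2 t"
    have "\<exists>t. min a1 (min b1 c1) \<le> t \<and> t \<le> max a2 (max b2 c2) \<and> ?f t = s"
      apply (rule IVT')
      using s assms by (auto simp: cl_def intro!: continuous_intros)
    then obtain t where "?f t = s" by blast
    moreover have "cl a1 a2 t \<in> {a1..a2}" "cl b1 b2 t \<in> {b1..b2}" "cl c1 c2 t \<in> {c1..c2}"
      using assms by (auto simp: cl_def)
    ultimately show "s \<in> metric_sum3 {a1..a2} {b1..b2} {c1..c2}"
      using cl_pair[OF assms(1,2), of t] cl_pair[OF assms(2,3), of t]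
      unfolding metric_sum3_def metric_chains3_def by blast
  qed
qed

lemma to_int: assumes "A \<noteq> {}" "convex A" "compact A"
  obtains a1 a2 where "a1 \<le> a2" "A = {a1..a2::real}"
proof -
  have "connected A" using assms convex_connected by blast
  then obtain a1 a2 where "A = {a1..a2::real}" using assms connected_compact_interval_1 by meson
  then show ?thesis using that assms(1) by auto
qed

theorem proposition2p3:
  fixes A B C :: "real set"
  assumes "A \<noteq> {}" "convex A" "compact A"
      and "B \<noteq> {}" "convex B" "compact B"
      and "C \<noteq> {}" "convex C" "compact C"
  shows "metric_sum (metric_sum A B) C = metric_sum A (metric_sum B C)
       \<and> metric_sum A (metric_sum B C) = metric_sum3 A B C"
proof -
  obtain a1 a2 where a: "a1 \<le> a2" "A = {a1..a2}" using to_int assms(1-3) by blast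
  obtain b1 b2 where b: "b1 \<le> b2" "B = {b1..b2}" using to_int assms(4-6) by blast
  obtain c1 c2 where c: "c1 \<le> c2" "C = {c1..c2}" using to_int assms(7-9) by blast
  have ab: "a1 + b1 \<le> a2 + b2" "b1 + c1 \<le> b2 + c2" using a b c by auto
  show ?thesis using a b c
    by (simp add: sum_int sum3_int ab add.assoc)
qed

end
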